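(* Let $k\ge 1$ and $1\le k^*\le k$ be integers, and run the Reduce-By-Median-Counter algorithm (defined in the context) with parameters $k,k^*$ on a weighted stream $(i_1,\Delta_1),(i_2,\Delta_2),\dots$. For each $n\ge 0$ let $f_{i,n}=\sum_{t\le n: i_t=i}\Delta_t$, let $\hat f_{i,n}$ be the output of Estimate$(i)$ after the first $n$ updates are processed, let $E_n=\max_{i\in[m]}(f_{i,n}-\hat f_{i,n})$, let $N_n=\sum_{t=1}^n\Delta_t$, and let $C_n=\sum_{j\in T}c(j)$ be the sum of the counters after the first $n$ updates. Then for every $n\ge 0$, $$E_n\le \frac{N_n-C_n}{k^*}.$$
   Context: A weighted stream over the universe $[m]=\{1,\dots,m\}$ is a sequence of updates $(i_t,\Delta_t)$ with $i_t\in[m]$ and real weights $\Delta_t>0$. The Reduce-By-Median-Counter algorithm with integer parameters $k\ge 1$ and $1\le k^*\le k$ maintains a set $T\subseteq[m]$ of at most $k$ items, each $j\in T$ carrying a nonnegative real counter $c(j)$; initially $T=\emptyset$. Update$(i,\Delta)$: if $i\in T$, set $c(i)\gets c(i)+\Delta$; else if $|T|<k$, add $i$ to $T$ with $c(i)=\Delta$; else call DecrementCounters(), and afterwards, if $\Delta\ge c_{k^*}$, add $i$ to $T$ with $c(i)=\Delta-c_{k^*}$. DecrementCounters(): let $c_{k^*}$ be the $k^*$-th largest value, counting multiplicity, of the multiset $\{c(j): j\in T\}$; for every $j\in T$ set $c(j)\gets c(j)-c_{k^*}$, and remove $j$ from $T$ if now $c(j)\le 0$. Estimate$(i)$ returns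 $c(i)$ if $i\in T$ and $0$ otherwise. *)

theory Defs
  imports Complex_Main "HOL-Library.Multiset"
begin

text \<open>State of Reduce-By-Median-Counter: the set T of tracked items and the counters c
  (c j is only meaningful for j in T).\<close>
type_synonym rbm_state = "nat set \<times> (nat \<Rightarrow> real)"

definition kth_largest :: "nat \<Rightarrow> nat set \<Rightarrow> (nat \<Rightarrow> real) \<Rightarrow> real" where
  "kth_largest ks T c = rev (sorted_list_of_multiset (image_mset c (mset_set T))) ! (ks - 1)"

definition decrement_counters :: "nat \<Rightarrow> rbm_state \<Rightarrow> rbm_state" where
  "decrement_counters ks S =
     (let T = fst S; c = snd S; v = kth_largest ks T c; c' = (\<lambda>j. c j - v)
      in ({j \<in> T. c' j > 0}, c'))"

definition rbm_update :: "nat \<Rightarrow> nat \<Rightarrow> rbm_state \<Rightarrow> nat \<Rightarrow> real \<Rightarrow> rbm_state" where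
  "rbm_update k ks S i \<Delta> =
     (let T = fst S; c = snd S in
      if i \<in> T then (T, c(i := c i + \<Delta>))
      else if card T < k then (insert i T, c(i := \<Delta>))
      else (let v = kth_largest ks T c; S' = decrement_counters ks S in
            if \<Delta> \<ge> v then (insert i (fst S'), (snd S')(i := \<Delta> - v)) else S'))"

text \<open>State after the first n updates of the stream (item t, weight t), t = 1, 2, ...\<close>
primrec rbm_run :: "nat \<Rightarrow> nat \<Rightarrow> (nat \<Rightarrow> nat) \<Rightarrow> (nat \<Rightarrow> real) \<Rightarrow> nat \<Rightarrow> rbm_state" where
  "rbm_run k ks item w 0 = ({}, (\<lambda>_. 0))"
| "rbm_run k ks item w (Suc n) = rbm_update k ks (rbm_run k ks item w n) (item (Suc n)) (w (Suc n))"

definition rbm_estimate :: "rbm_state \<Rightarrow> nat \<Rightarrow> real" where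
  "rbm_estimate S i = (if i \<in> fst S then snd S i else 0)"

definition rbm_counter_sum :: "rbm_state \<Rightarrow> real" where
  "rbm_counter_sum S = (\<Sum>j\<in>fst S. snd S j)"

definition freq :: "(nat \<Rightarrow> nat) \<Rightarrow> (nat \<Rightarrow> real) \<Rightarrow> nat \<Rightarrow> nat \<Rightarrow> real" where
  "freq item w i n = (\<Sum>t\<in>{t\<in>{1..n}. item t = i}. w t)"

end

theory Submission
  imports Defs
begin

lemma kth_props:
  fixes T :: "nat set" and c :: "nat \<Rightarrow> real"
  assumes fin: "finite T" and ks1: "1 \<le> ks" and kscard: "ks \<le> card T"
    and nn: "\<forall>j\<in>T. c j \<ge> 0"
  shows "kth_largest ks T c \<in> c ` T \<and> kth_largest ks T c \<ge> 0 \<and> real ks * kth_largest ks T c \<le> (\<Sum>j\<in>T. min (c j) (kth_largest ks T c))"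
proof -
  define M where "M = image_mset c (mset_set T)"
  define L where "L = rev (sorted_list_of_multiset M)"
  define v where "v = L ! (ks - 1)"
  have kv: "kth_largest ks T c = v" unfolding kth_largest_def v_def L_def M_def by simp
  have mL: "mset L = M" unfolding L_def by simp
  have len: "length L = card T"
    by (metis mL M_def size_image_mset size_mset size_mset_set)
  have srt: "sorted (rev L)" unfolding L_def by simp
  have setL: "set L = c ` T"
    by (metis mL M_def set_mset_mset set_image_mset finite_set_mset_mset_set fin)
  have ksl: "ks - 1 < length L" using len ks1 kscard by simp
  have vin: "v \<in> set L" unfolding v_def using ksl by simp
  have v0: "v \<ge> 0" using vin setL nn by auto
  define g where "g = (\<lambda>x::real. min x v)"
  have "(\<Sum>j\<in>T. min (c j) v) = sum_mset (image_mset g M)"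
    unfolding M_def g_def sum_unfold_sum_mset[of "\<lambda>j. min (c j) v"] by (simp add: multiset.map_comp o_def)
  also have "\<dots> = sum_list (map g L)"
    by (metis mL mset_map sum_mset_sum_list)
  also have "\<dots> = (\<Sum>i = 0..<length L. g (L ! i))"
    by (simp add: sum_list_sum_nth)
  also have "\<dots> \<ge> (\<Sum>i = 0..<ks. g (L ! i))"
  proof (rule sum_mono2)
    show "{0..<ks} \<subseteq> {0..<length L}" using ksl by auto
    show "\<And>b. b \<in> {0..<length L} - {0..<ks} \<Longrightarrow> 0 \<le> g (L ! b)"
    proof -
      fix b assume "b \<in> {0..<length L} - {0..<ks}"
      then have "L ! b \<in> set L" by auto
      then have "L ! b \<ge> 0" using setL nn by auto
      then show "0 \<le> g (L ! b)" using v0 unfolding g_def by simp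
    qed
  qed simp
  moreover have "(\<Sum>i = 0..<ks. g (L ! i)) = real ks * v"
  proof -
    have "\<And>i. i \<in> {0..<ks} \<Longrightarrow> g (L ! i) = v"
    proof -
      fix i assume "i \<in> {0..<ks}"
      then have "L ! (ks - 1) \<le> L ! i" using sorted_rev_nth_mono[OF srt, of i "ks - 1"] ksl by simp
      then show "g (L ! i) = v" unfolding g_def v_def by simp
    qed
    then show ?thesis by simp
  qed
  ultimately show ?thesis using kv v0 vin setL by simp
qed

lemma min_split:
  fixes T :: "nat set" and c :: "nat \<Rightarrow> real"
  assumes fin: "finite T"
  shows "(\<Sum>j\<in>T. c j) - (\<Sum>j\<in>{j\<in>T. c j - v > 0}. c j - v) = (\<Sum>j\<in>T. min (c j) v)"
proof -
  let ?T1 = "{j\<in>T. c j - v > 0}"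
  have sub: "?T1 \<subseteq> T" by auto
  have f1: "finite ?T1" using fin by simp
  have a: "(\<Sum>j\<in>T. c j) = (\<Sum>j\<in>?T1. c j) + (\<Sum>j\<in>T - ?T1. c j)"
    using sum.subset_diff[OF sub fin, of c] by linarith
  have b: "(\<Sum>j\<in>T. min (c j) v) = (\<Sum>j\<in>?T1. min (c j) v) + (\<Sum>j\<in>T - ?T1. min (c j) v)"
    using sum.subset_diff[OF sub fin, of "\<lambda>j. min (c j) v"] by linarith
  have c1: "(\<Sum>j\<in>?T1. min (c j) v) = (\<Sum>j\<in>?T1. v)" by (rule sum.cong) auto
  have c2: "(\<Sum>j\<in>T - ?T1. min (c j) v) = (\<Sum>j\<in>T - ?T1. c j)" by (rule sum.cong) auto
  have d: "(\<Sum>j\<in>?T1. c j - v) = (\<Sum>j\<in>?T1. c j) - (\<Sum>j\<in>?T1. v)" by (simp add: sum_subtractf)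
  show ?thesis using a b c1 c2 d by simp
qed

lemma step:
  fixes T :: "nat set" and c :: "nat \<Rightarrow> real"
  assumes fin: "finite T" and ck: "card T \<le> k" and nn: "\<forall>j\<in>T. c j \<ge> 0"
    and dpos: "\<Delta> > 0" and ks1: "1 \<le> ks" and ksk: "ks \<le> k"
    and upd: "rbm_update k ks (T, c) i \<Delta> = (T', c')"
  shows "finite T' \<and> card T' \<le> k \<and> (\<forall>j\<in>T'. c' j \<ge> 0) \<and>
    (\<exists>v\<ge>0. (\<forall>x. (if x = i then \<Delta> else 0) - rbm_estimate (T', c') x \<le> - rbm_estimate (T, c) x + v)
       \<and> real ks * v \<le> rbm_counter_sum (T, c) + \<Delta> - rbm_counter_sum (T', c'))"
proof (cases "i \<in> T")
  case True
  then have e: "T' = T" "c' = c(i := c i + \<Delta>)" using upd by (auto simp: rbm_update_def)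
  have s: "(\<Sum>j\<in>T. c' j) = (\<Sum>j\<in>T. c j) + \<Delta>"
  proof -
    have "(\<Sum>j\<in>T. c' j) = c' i + (\<Sum>j\<in>T - {i}. c' j)" using sum.remove[OF fin True] by blast
    also have "(\<Sum>j\<in>T - {i}. c' j) = (\<Sum>j\<in>T - {i}. c j)" using e by (intro sum.cong) auto
    also have "(\<Sum>j\<in>T. c j) = c i + (\<Sum>j\<in>T - {i}. c j)" using sum.remove[OF fin True] by blast
    ultimately show ?thesis using e by simp
  qed
  show ?thesis
    apply (intro conjI exI[of _ 0])
    using e fin ck nn dpos True s by (auto simp: rbm_estimate_def rbm_counter_sum_def)
next
  case False
  note iT = False
  show ?thesis
  proof (cases "card T < k")
    case True
    then have e: "T' = insert i T" "c' = c(i := \<Delta>)" using upd iT by (auto simp: rbm_update_def)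
    have s: "(\<Sum>j\<in>T'. c' j) = (\<Sum>j\<in>T. c j) + \<Delta>"
    proof -
      have "(\<Sum>j\<in>T'. c' j) = c' i + (\<Sum>j\<in>T. c' j)" using e fin iT by simp
      also have "(\<Sum>j\<in>T. c' j) = (\<Sum>j\<in>T. c j)" using e iT by (intro sum.cong) auto
      finally show ?thesis using e by simp
    qed
    show ?thesis
      apply (intro conjI exI[of _ 0])
      using e fin True nn dpos iT s by (auto simp: rbm_estimate_def rbm_counter_sum_def card_insert_if)
  next
    case False
    then have cT: "card T = k" using ck by simp
    define v where "v = kth_largest ks T c"
    define T1 where "T1 = {j\<in>T. c j - v > 0}"
    have kp: "v \<ge> 0" "real ks * v \<le> (\<Sum>j\<in>T. min (c j) v)"
      using kth_props[OF fin ks1 _ nn] cT ksk unfolding v_def by auto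
    have vT: "v \<in> c ` T" using kth_props[OF fin ks1 _ nn] cT ksk unfolding v_def by auto
    have ms: "(\<Sum>j\<in>T. c j) - (\<Sum>j\<in>T1. c j - v) = (\<Sum>j\<in>T. min (c j) v)"
      unfolding T1_def by (rule min_split[OF fin])
    have T1s: "T1 \<subseteq> T" unfolding T1_def by auto
    have cT1: "card T1 < card T"
    proof -
      obtain j0 where "j0 \<in> T" "c j0 = v" using vT by auto
      then have "T1 \<subset> T" using T1s unfolding T1_def by auto
      then show ?thesis using fin psubset_card_mono by blast
    qed
    have fT1: "finite T1" using T1s fin finite_subset by blast
    have iT1: "i \<notin> T1" using iT T1s by auto
    have dec: "decrement_counters ks (T, c) = (T1, \<lambda>j. c j - v)"
      unfolding decrement_counters_def T1_def v_def by (simp add: Let_def)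
    show ?thesis
    proof (cases "\<Delta> \<ge> v")
      case True
      then have e: "T' = insert i T1" "c' = (\<lambda>j. c j - v)(i := \<Delta> - v)"
        using upd iT False dec unfolding rbm_update_def v_def by (auto simp: Let_def)
      have s: "(\<Sum>j\<in>T'. c' j) = (\<Sum>j\<in>T1. c j - v) + (\<Delta> - v)"
      proof -
        have "(\<Sum>j\<in>T'. c' j) = c' i + (\<Sum>j\<in>T1. c' j)" using e fT1 iT1 by simp
        also have "(\<Sum>j\<in>T1. c' j) = (\<Sum>j\<in>T1. c j - v)" using e iT1 by (intro sum.cong) auto
        finally show ?thesis using e by simp
      qed
      have err: "\<forall>x. (if x = i then \<Delta> else 0) - rbm_estimate (T', c') x \<le> - rbm_estimate (T, c) x + v"
      proof
        fix x
        show "(if x = i then \<Delta> else 0) - rbm_estimate (T', c') x \<le> - rbm_estimate (T, c) x + v"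
        proof (cases "x = i")
          case True then show ?thesis using e iT by (simp add: rbm_estimate_def)
        next
          case xi: False
          show ?thesis
          proof (cases "x \<in> T1")
            case True then show ?thesis using e xi T1s by (auto simp: rbm_estimate_def)
          next
            case nT1: False
            then show ?thesis using e xi kp(1) unfolding rbm_estimate_def T1_def by auto
          qed
        qed
      qed
      show ?thesis
        apply (intro conjI exI[of _ v])
        using e fT1 cT1 cT True T1_def iT1 kp err ms s
        by (auto simp: rbm_counter_sum_def card_insert_if)
    next
      case nd: False
      then have e: "T' = T1" "c' = (\<lambda>j. c j - v)"
        using upd iT False dec unfolding rbm_update_def v_def by (auto simp: Let_def)
      have err: "\<forall>x. (if x = i then \<Delta> else 0) - rbm_estimate (T', c') x \<le> - rbm_estimate (T, c) x + v"
      proof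
        fix x
        show "(if x = i then \<Delta> else 0) - rbm_estimate (T', c') x \<le> - rbm_estimate (T, c) x + v"
        proof (cases "x = i")
          case True then show ?thesis using e iT iT1 nd by (simp add: rbm_estimate_def)
        next
          case xi: False
          show ?thesis
          proof (cases "x \<in> T1")
            case True then show ?thesis using e xi T1s by (auto simp: rbm_estimate_def)
          next
            case nT1: False
            then show ?thesis using e xi kp(1) unfolding rbm_estimate_def T1_def by auto
          qed
        qed
      qed
      show ?thesis
        apply (intro conjI exI[of _ v])
        using e fT1 cT1 cT T1_def kp err ms dpos
        by (auto simp: rbm_counter_sum_def)
    qed
  qed
qed

lemma freq_Suc: "freq item w x (Suc n) = freq item w x n + (if item (Suc n) = x then w (Suc n) else 0)"
proof -
  have "{t\<in>{1..Suc n}. item t = x} = (if item (Suc n) = x then insert (Suc n) {t\<in>{1..n}. item t = x} else {t\<in>{1..n}. item t = x})"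
    by (auto simp: le_Suc_eq)
  then show ?thesis unfolding freq_def by auto
qed

lemma invariant:
  assumes ks1: "1 \<le> ks" and ksk: "ks \<le> k"
    and wpos: "\<And>t. t \<ge> 1 \<Longrightarrow> w t > 0"
  shows "finite (fst (rbm_run k ks item w n)) \<and> card (fst (rbm_run k ks item w n)) \<le> k
    \<and> (\<forall>j\<in>fst (rbm_run k ks item w n). snd (rbm_run k ks item w n) j \<ge> 0)
    \<and> (\<exists>D. (\<forall>x. freq item w x n - rbm_estimate (rbm_run k ks item w n) x \<le> D)
         \<and> real ks * D \<le> (\<Sum>t = 1..n. w t) - rbm_counter_sum (rbm_run k ks item w n))"
proof (induction n)
  case 0
  show ?case
    by (auto simp: freq_def rbm_estimate_def rbm_counter_sum_def intro!: exI[of _ 0])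
next
  case (Suc n)
  obtain T c where S: "rbm_run k ks item w n = (T, c)" by fastforce
  obtain T' c' where S': "rbm_run k ks item w (Suc n) = (T', c')" by fastforce
  from Suc.IH S obtain D where fin: "finite T" and ck: "card T \<le> k" and nn: "\<forall>j\<in>T. c j \<ge> 0"
    and D1: "\<forall>x. freq item w x n - rbm_estimate (T, c) x \<le> D"
    and D2: "real ks * D \<le> (\<Sum>t = 1..n. w t) - rbm_counter_sum (T, c)" by auto
  have upd: "rbm_update k ks (T, c) (item (Suc n)) (w (Suc n)) = (T', c')" using S S' by simp
  from step[OF fin ck nn wpos[of "Suc n"] ks1 ksk upd] obtain v where
    r: "finite T'" "card T' \<le> k" "\<forall>j\<in>T'. c' j \<ge> 0" "v \<ge> 0"
    and e: "\<forall>x. (if x = item (Suc n) then w (Suc n) else 0) - rbm_estimate (T', c') x \<le> - rbm_estimate (T, c) x + v"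
    and cs: "real ks * v \<le> rbm_counter_sum (T, c) + w (Suc n) - rbm_counter_sum (T', c')" by auto
  have "\<forall>x. freq item w x (Suc n) - rbm_estimate (T', c') x \<le> D + v"
  proof
    fix x show "freq item w x (Suc n) - rbm_estimate (T', c') x \<le> D + v"
      using D1 e unfolding freq_Suc by (smt (verit))
  qed
  moreover have "real ks * (D + v) \<le> (\<Sum>t = 1..Suc n. w t) - rbm_counter_sum (T', c')"
    using D2 cs by (simp add: distrib_left)
  ultimately show ?case using r S' by auto
qed

theorem lemma6:
  fixes k ks m :: nat and item :: "nat \<Rightarrow> nat" and w :: "nat \<Rightarrow> real"
  assumes "1 \<le> k" and "1 \<le> ks" and "ks \<le> k" and "1 \<le> m"
    and "\<And>t. t \<ge> 1 \<Longrightarrow> item t \<in> {1..m}"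
    and "\<And>t. t \<ge> 1 \<Longrightarrow> w t > 0"
  shows "Max ((\<lambda>i. freq item w i n - rbm_estimate (rbm_run k ks item w n) i) ` {1..m})
           \<le> ((\<Sum>t = 1..n. w t) - rbm_counter_sum (rbm_run k ks item w n)) / real ks"
proof -
  from invariant[where ks=ks and k=k and w=w and n=n and item=item, OF assms(2,3) assms(6)] obtain D where
    D1: "\<forall>x. freq item w x n - rbm_estimate (rbm_run k ks item w n) x \<le> D"
    and D2: "real ks * D \<le> (\<Sum>t = 1..n. w t) - rbm_counter_sum (rbm_run k ks item w n)" by blast
  have ksp: "real ks > 0" using assms(2) by simp
  have "D \<le> ((\<Sum>t = 1..n. w t) - rbm_counter_sum (rbm_run k ks item w n)) / real ks"
    using D2 ksp by (simp add: pos_le_divide_eq mult.commute)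
  moreover have "Max ((\<lambda>i. freq item w i n - rbm_estimate (rbm_run k ks item w n) i) ` {1..m}) \<le> D"
    using D1 assms(4) by (subst Max_le_iff) auto
  ultimately show ?thesis by linarith
qed

end
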